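(* Let $G=C_2^r$ with $r\ge 3$. Then $\{2,r-1,r\}\in\mathcal L(G)$ if and only if $r\in[3,5]$.
   Context: $C_2^r$ denotes an elementary abelian $2$-group of rank $r$; $[a,b]=\{x\in\mathbb Z:a\le x\le b\}$. For a finite abelian group $G$, a sequence over $G$ is an element of the free abelian monoid $\mathcal F(G)$ with basis $G$ (a finite unordered list of elements of $G$, repetitions allowed). $\mathcal B(G)$ is the monoid of zero-sum sequences over $G$ (including the empty sequence). An atom is a minimal zero-sum sequence, i.e. a nonempty zero-sum sequence that is not a product of two nonempty zero-sum sequences. For $B\in\mathcal B(G)$, $\mathsf L(B)=\{k\in\mathbb N_0: B \text{ is a product of } k \text{ atoms}\}$, and $\mathcal L(G)=\{\mathsf L(B):B\in\mathcal B(G)\}$. *)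

theory Defs
  imports Main "HOL-Library.Multiset"
begin

text \<open>Model of the elementary abelian 2-group C_2^r: elements are subsets of {..<r}
  (characteristic vectors in F_2^r), addition is symmetric difference, zero is the empty set.\<close>

definition elem2 :: "nat \<Rightarrow> nat set \<Rightarrow> bool" where
  "elem2 r g \<longleftrightarrow> g \<subseteq> {..<r}"

definition seq_over :: "nat \<Rightarrow> nat set multiset \<Rightarrow> bool" where
  "seq_over r S \<longleftrightarrow> (\<forall>g\<in>#S. elem2 r g)"

definition seq_sum :: "nat set multiset \<Rightarrow> nat set" where
  "seq_sum S = {i. odd (size (filter_mset (\<lambda>g. i \<in> g) S))}"

definition zero_sum_seq :: "nat \<Rightarrow> nat set multiset \<Rightarrow> bool" where
  "zero_sum_seq r S \<longleftrightarrow> seq_over r S \<and> seq_sum S = {}"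

definition atom2 :: "nat \<Rightarrow> nat set multiset \<Rightarrow> bool" where
  "atom2 r A \<longleftrightarrow> zero_sum_seq r A \<and> A \<noteq> {#} \<and>
     (\<forall>U V. A = U + V \<and> zero_sum_seq r U \<and> zero_sum_seq r V \<longrightarrow> U = {#} \<or> V = {#})"

definition Lset :: "nat \<Rightarrow> nat set multiset \<Rightarrow> nat set" where
  "Lset r B = {k. \<exists>F :: nat set multiset multiset.
      size F = k \<and> (\<forall>A\<in>#F. atom2 r A) \<and> sum_mset F = B}"

definition system_of_sets :: "nat \<Rightarrow> nat set set" where
  "system_of_sets r = {Lset r B | B. zero_sum_seq r B}"

end

theory Submission
  imports Defs
begin


abbreviation cnt :: "nat \<Rightarrow> nat set multiset \<Rightarrow> nat" where
  "cnt i M \<equiv> size (filter_mset (\<lambda>g. i \<in> g) M)"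

lemma mem_seq_sum: "i \<in> seq_sum M \<longleftrightarrow> odd (cnt i M)"
  by (simp add: seq_sum_def)

lemma seq_sum_empty[simp]: "seq_sum {#} = {}"
  by (simp add: seq_sum_def)

lemma mem_seq_sum_add: "i \<in> seq_sum (add_mset g M) \<longleftrightarrow> ((i \<in> g) \<noteq> (i \<in> seq_sum M))"
  by (simp add: seq_sum_def)

lemma mem_seq_sum_plus: "i \<in> seq_sum (M + N) \<longleftrightarrow> ((i \<in> seq_sum M) \<noteq> (i \<in> seq_sum N))"
  by (simp add: seq_sum_def)

lemma zs_iff: "seq_sum M = {} \<longleftrightarrow> (\<forall>i. even (cnt i M))"
  by (auto simp add: seq_sum_def)

lemma seq_sum_single[simp]: "seq_sum {#g#} = g"
  by (auto simp add: seq_sum_def)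

lemma seq_sum_double[simp]: "seq_sum {#g, g#} = {}"
  by (auto simp add: seq_sum_def)

lemma zs_plus: "seq_sum M = {} \<Longrightarrow> seq_sum N = {} \<Longrightarrow> seq_sum (M + N) = {}"
  using mem_seq_sum_plus by blast

lemma zs_minus: "N \<subseteq># M \<Longrightarrow> seq_sum M = {} \<Longrightarrow> seq_sum N = {} \<Longrightarrow> seq_sum (M - N) = {}"
  by (metis mem_seq_sum_plus subset_mset.add_diff_inverse empty_iff equals0I)

lemma seq_over_mono: "seq_over r M \<Longrightarrow> N \<subseteq># M \<Longrightarrow> seq_over r N"
  unfolding seq_over_def by (meson mset_subset_eqD)

lemma seq_over_plus[simp]: "seq_over r (M + N) \<longleftrightarrow> seq_over r M \<and> seq_over r N"
  unfolding seq_over_def by auto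

lemma atom_zs: "atom2 r A \<Longrightarrow> zero_sum_seq r A"
  by (simp add: atom2_def)

lemma atom_ne: "atom2 r A \<Longrightarrow> A \<noteq> {#}"
  by (simp add: atom2_def)

lemma atom_sub:
  assumes "atom2 r A" "X \<subseteq># A" "seq_sum X = {}"
  shows "X = {#} \<or> X = A"
proof -
  have A: "A = X + (A - X)" using assms(2) by simp
  have z: "zero_sum_seq r A" using assms(1) by (simp add: atom2_def)
  have "zero_sum_seq r X" using z assms(2,3) seq_over_mono unfolding zero_sum_seq_def by blast
  moreover have "zero_sum_seq r (A - X)" using z assms(2,3) seq_over_mono zs_minus
    unfolding zero_sum_seq_def by (meson diff_subset_eq_self)
  ultimately have "X = {#} \<or> A - X = {#}" using assms(1) A unfolding atom2_def by blast
  then show ?thesis using A by auto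
qed

lemma atom_zero: "atom2 r A \<Longrightarrow> {} \<in># A \<Longrightarrow> A = {#{}#}"
  using atom_sub[of r A "{#{}#}"] by auto

lemma atom_dup:
  assumes "atom2 r A" "count A g \<ge> 2" shows "A = {#g, g#}"
proof -
  have "{#g, g#} \<subseteq># A" using assms(2)
    by (auto simp: subseteq_mset_def)
  then show ?thesis using atom_sub[OF assms(1)] by fastforce
qed

lemma atom_size1: assumes "atom2 r A" "size A = 1" shows "A = {#{}#}"
proof -
  obtain g where g: "A = {#g#}" using assms(2) size_1_singleton_mset by blast
  then have "g = {}" using assms(1) by (simp add: atom2_def zero_sum_seq_def)
  then show ?thesis using g by simp
qed

lemma atom_size2: assumes "atom2 r A" "size A = 2" shows "\<exists>g. A = {#g, g#} \<and> g \<noteq> {}"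
proof -
  obtain g h where gh: "A = {#g, h#}"
  proof -
    obtain g A' where "A = add_mset g A'" using assms(2) by (metis size_eq_Suc_imp_eq_union Suc_1 add_mset_add_single)
    moreover then have "size A' = 1" using assms(2) by simp
    moreover then obtain h where "A' = {#h#}" using size_1_singleton_mset by blast
    ultimately show ?thesis using that by blast
  qed
  have "seq_sum A = {}" using assms(1) by (simp add: atom2_def zero_sum_seq_def)
  then have "g = h" using gh by (auto simp: set_eq_iff mem_seq_sum_add)
  moreover have "g \<noteq> {}"
  proof
    assume "g = {}" then have "{} \<in># A" using gh by simp
    then have "A = {#{}#}" using atom_zero assms(1) by blast
    then show False using assms(2) by simp
  qed
  ultimately show ?thesis using gh by blast
qed

lemma atom_sqfree: assumes "atom2 r A" "size A \<ge> 3" shows "count A g \<le> 1"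
proof (rule ccontr)
  assume "\<not> count A g \<le> 1"
  then have "A = {#g, g#}" using atom_dup[OF assms(1)] by simp
  then show False using assms(2) by simp
qed

lemma atom_double: assumes "g \<noteq> {}" "elem2 r g" shows "atom2 r {#g, g#}"
  unfolding atom2_def
proof (intro conjI allI impI)
  show "zero_sum_seq r {#g, g#}" using assms by (simp add: zero_sum_seq_def seq_over_def)
  show "{#g, g#} \<noteq> {#}" by simp
  fix U V assume h: "{#g, g#} = U + V \<and> zero_sum_seq r U \<and> zero_sum_seq r V"
  show "U = {#} \<or> V = {#}"
  proof (rule ccontr)
    assume "\<not> (U = {#} \<or> V = {#})"
    then have "size U \<ge> 1" "size V \<ge> 1" by (auto simp: Suc_le_eq nonempty_has_size)
    moreover have "size U + size V = 2" using h by (metis size_union size_add_mset size_single Suc_1)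
    ultimately have "size U = 1" by arith
    then obtain x where "U = {#x#}" using size_1_singleton_mset by blast
    moreover then have "x \<in># {#g, g#}" using h by (metis union_iff single_subset_iff mset_subset_eq_add_left subset_mset.add_increasing2 add_mset_add_single multi_member_this)
    moreover then have "x = g" by simp
    ultimately show False using h assms(1) by (simp add: zero_sum_seq_def)
  qed
qed

lemma atom_size_count0: assumes "atom2 r A" shows "2 \<le> size A + count A {}"
proof (cases "{} \<in># A")
  case True then show ?thesis using atom_zero[OF assms] by simp
next
  case False
  have "size A \<noteq> 0" using atom_ne[OF assms] by simp
  moreover have "size A \<noteq> 1" using atom_size1[OF assms] False by auto
  ultimately show ?thesis by arith
qed

lemma seq_sum_sum_mset:
  assumes "\<forall>A\<in>#F. seq_sum A = {}" shows "seq_sum (sum_mset F) = {}"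
  using assms by (induction F) (simp_all add: zs_plus)

lemma seq_over_empty[simp]: "seq_over r {#}" by (simp add: seq_over_def)

lemma seq_over_add[simp]: "seq_over r (add_mset g M) \<longleftrightarrow> elem2 r g \<and> seq_over r M"
  by (simp add: seq_over_def)

lemma seq_over_sum_mset:
  assumes "\<forall>A\<in>#F. seq_over r A" shows "seq_over r (sum_mset F)"
  using assms by (induction F) auto

lemma sum_mset_empty_iff: "sum_mset (F :: 'a multiset multiset) = {#} \<longleftrightarrow> (\<forall>A\<in>#F. A = {#})"
  by (induction F) auto

lemma fact_atom:
  assumes A: "atom2 r A" and G: "\<forall>Z\<in>#G. atom2 r Z" "sum_mset G = A"
  shows "G = {#A#}"
proof -
  have "G \<noteq> {#}" using G(2) atom_ne[OF A] by auto
  then obtain Z G' where G': "G = add_mset Z G'" by (meson multiset_cases)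
  have Z: "atom2 r Z" using G(1) G' by simp
  have "zero_sum_seq r (sum_mset G')"
    using G(1) G' seq_sum_sum_mset seq_over_sum_mset unfolding zero_sum_seq_def atom2_def by auto
  moreover have "A = Z + sum_mset G'" using G' G(2) by simp
  ultimately have "Z = {#} \<or> sum_mset G' = {#}" using A Z unfolding atom2_def by blast
  then have "sum_mset G' = {#}" using atom_ne[OF Z] by blast
  then have "\<forall>A\<in>#G'. A = {#}" using sum_mset_empty_iff by blast
  then have "G' = {#}" using G(1) G' atom_ne by (metis multiset_nonemptyE union_iff add_mset_add_single)
  then show ?thesis using G' \<open>A = Z + sum_mset G'\<close> by simp
qed

lemma exists_fact:
  assumes "zero_sum_seq r B" shows "\<exists>F. (\<forall>A\<in>#F. atom2 r A) \<and> sum_mset F = B"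
  using assms
proof (induction "size B" arbitrary: B rule: less_induct)
  case less
  show ?case
  proof (cases "B = {#}")
    case True then show ?thesis by (intro exI[of _ "{#}"]) simp
  next
    case False
    show ?thesis
    proof (cases "atom2 r B")
      case True then show ?thesis by (intro exI[of _ "{#B#}"]) simp
    next
      case na: False
      then obtain U V where UV: "B = U + V" "zero_sum_seq r U" "zero_sum_seq r V" "U \<noteq> {#}" "V \<noteq> {#}"
        using False less.prems unfolding atom2_def by blast
      have "size U < size B" "size V < size B" using UV by (auto simp: nonempty_has_size)
      then obtain FU FV where "(\<forall>A\<in>#FU. atom2 r A) \<and> sum_mset FU = U" "(\<forall>A\<in>#FV. atom2 r A) \<and> sum_mset FV = V"
        using less.hyps UV by meson
      then show ?thesis using UV by (intro exI[of _ "FU + FV"]) auto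
    qed
  qed
qed

lemma subset_add_mset_notin:
  assumes "T' \<subseteq># add_mset y N" "y \<notin># T'" shows "T' \<subseteq># N"
  unfolding subseteq_mset_def
proof
  fix a
  have h: "count T' a \<le> count (add_mset y N) a" using assms(1) by (simp add: subseteq_mset_def)
  show "count T' a \<le> count N a"
  proof (cases "a = y")
    case True then show ?thesis using assms(2) by (simp add: not_in_iff)
  next
    case False then show ?thesis using h by simp
  qed
qed

lemma subset_mset_add_mset_right: "T \<subseteq># M \<Longrightarrow> T \<subseteq># add_mset x M"
  by (simp add: subset_mset.order_trans[of T M])

lemma sub_image_mset:
  "T' \<subseteq># image_mset f M \<Longrightarrow> \<exists>T. T \<subseteq># M \<and> image_mset f T = T'"
proof (induction M arbitrary: T')
  case empty then show ?case by simp
next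
  case (add x M)
  show ?case
  proof (cases "f x \<in># T'")
    case True
    then have "T' - {#f x#} \<subseteq># image_mset f M" using add.prems
      by (simp add: subset_eq_diff_conv)
    then obtain T where "T \<subseteq># M" "image_mset f T = T' - {#f x#}" using add.IH by blast
    then show ?thesis using True
      by (intro exI[of _ "add_mset x T"]) (auto simp: insert_DiffM)
  next
    case False
    then have "T' \<subseteq># image_mset f M" using add.prems subset_add_mset_notin by simp
    then show ?thesis using add.IH subset_mset_add_mset_right by meson
  qed
qed

lemma par_lemma:
  "odd (cnt i (image_mset (\<lambda>g. if r \<in> g then (g - g0) \<union> (g0 - g) else g) T)) \<longleftrightarrow>
   (odd (cnt i T) \<noteq> (i \<in> g0 \<and> odd (size (filter_mset (\<lambda>g. r \<in> g) T))))"
  by (induction T) (auto split: if_splits)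

lemma davenport_sub:
  "seq_over r S \<Longrightarrow> r < size S \<Longrightarrow> \<exists>T. T \<subseteq># S \<and> T \<noteq> {#} \<and> seq_sum T = {}"
proof (induction r arbitrary: S)
  case 0
  then obtain g where g: "g \<in># S" by (metis gr_implies_not0 multiset_nonemptyE size_empty)
  then have "g = {}" using 0 by (auto simp: seq_over_def elem2_def)
  then show ?case using g by (intro exI[of _ "{#g#}"]) auto
next
  case (Suc r)
  show ?case
  proof (cases "\<exists>g\<in>#S. r \<in> g")
    case False
    have "\<forall>g\<in>#S. g \<subseteq> {..<r}"
    proof (intro ballI subsetI)
      fix g x assume g: "g \<in># S" and x: "x \<in> g"
      have "x < Suc r" using Suc.prems(1) g x by (auto simp: seq_over_def elem2_def)
      moreover have "x \<noteq> r" using False g x by auto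
      ultimately show "x \<in> {..<r}" by simp
    qed
    then have "seq_over r S" by (simp add: seq_over_def elem2_def)
    then show ?thesis using Suc.IH Suc.prems(2) by simp
  next
    case True
    then obtain g0 where g0: "g0 \<in># S" "r \<in> g0" by blast
    define \<phi> where "\<phi> = (\<lambda>g. if r \<in> g then (g - g0) \<union> (g0 - g) else g)"
    define S0 where "S0 = S - {#g0#}"
    have S: "S = add_mset g0 S0" using g0 S0_def by simp
    have "seq_over r (image_mset \<phi> S0)"
      using Suc.prems(1) g0 unfolding seq_over_def elem2_def \<phi>_def S
      by (auto simp: less_Suc_eq subset_iff)
    moreover have "r < size (image_mset \<phi> S0)" using Suc.prems(2) S by simp
    ultimately obtain T' where T': "T' \<subseteq># image_mset \<phi> S0" "T' \<noteq> {#}" "seq_sum T' = {}"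
      using Suc.IH by blast
    obtain T0 where T0: "T0 \<subseteq># S0" "image_mset \<phi> T0 = T'" using sub_image_mset[OF T'(1)] by blast
    define p where "p = size (filter_mset (\<lambda>g. r \<in> g) T0)"
    define T where "T = (if odd p then add_mset g0 T0 else T0)"
    have "T \<subseteq># S" using T0(1) S subset_mset_add_mset_right unfolding T_def by auto
    moreover have "T \<noteq> {#}" using T0 T'(2) unfolding T_def by auto
    moreover have "seq_sum T = {}"
    proof -
      have "\<forall>i. even (cnt i (image_mset \<phi> T0))" using T'(3) T0(2) zs_iff by blast
      then have "\<forall>i. odd (cnt i T0) = (i \<in> g0 \<and> odd p)"
        using par_lemma[of i r g0 T0 for i] unfolding \<phi>_def p_def by blast
      then show ?thesis unfolding T_def by (auto simp: zs_iff)
    qed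
    ultimately show ?thesis by blast
  qed
qed

lemma davenport:
  assumes "atom2 r A" shows "size A \<le> Suc r"
proof (rule ccontr)
  assume "\<not> size A \<le> Suc r"
  then obtain g A' where A: "A = add_mset g A'" "r < size A'"
  proof -
    assume h: "\<And>g A'. A = add_mset g A' \<Longrightarrow> r < size A' \<Longrightarrow> thesis"
    obtain g where "g \<in># A" using atom_ne[OF assms] by blast
    then have "A = add_mset g (A - {#g#})" by simp
    moreover then have "r < size (A - {#g#})" using \<open>\<not> size A \<le> Suc r\<close>
      by (metis size_add_mset Suc_less_eq not_le)
    ultimately show thesis using h by blast
  qed
  have "seq_over r A'" using atom_zs[OF assms] A unfolding zero_sum_seq_def by simp
  then obtain T where T: "T \<subseteq># A'" "T \<noteq> {#}" "seq_sum T = {}" using davenport_sub A(2) by blast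
  have "T \<subseteq># A" using T(1) A subset_mset_add_mset_right by simp
  then have "T = A" using atom_sub[OF assms _ T(3)] T(2) by blast
  moreover have "size T \<le> size A'" using T(1) by (rule size_mset_mono)
  ultimately show False using A by simp
qed

lemma sub_sum_mset: "A \<in># F \<Longrightarrow> A \<subseteq># sum_mset F"
  by (metis mset_subset_eq_add_left sum_mset.remove)

lemma count_bound:
  assumes "\<forall>Z\<in>#G. \<exists>g\<in>#Z. P g" shows "size G \<le> size (filter_mset P (sum_mset G))"
  using assms
proof (induction G)
  case empty then show ?case by simp
next
  case (add Z G)
  obtain g where "g \<in># Z" "P g" using add.prems by auto
  then have "g \<in># filter_mset P Z" by simp
  then have "filter_mset P Z \<noteq> {#}" by auto
  then have "0 < size (filter_mset P Z)" using nonempty_has_size by blast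
  then have "1 \<le> size (filter_mset P Z)" by simp
  moreover have "size G \<le> size (filter_mset P (sum_mset G))" using add by simp
  ultimately show ?case by simp
qed

lemma sum_mset_doubles: "sum_mset (image_mset (\<lambda>g. {#g, g#}) Q) = Q + Q"
  by (induction Q) auto

lemma part_sum: "i \<in> seq_sum M \<longleftrightarrow> ((i \<in> seq_sum (filter_mset P M)) \<noteq> (i \<in> seq_sum (filter_mset (\<lambda>x. \<not> P x) M)))"
  by (metis mem_seq_sum_plus multiset_partition)

lemma in_sum_mset_ex: "d \<in># sum_mset F \<Longrightarrow> \<exists>Y\<in>#F. d \<in># Y"
  by (induction F) auto

lemma size_sum_mset_ge: "\<forall>A\<in>#(F :: 'a multiset multiset). k \<le> size A \<Longrightarrow> k * size F \<le> size (sum_mset F)"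
  by (induction F) (auto simp: size_union)

lemma size_sum_mset_eq: "\<forall>A\<in>#(F :: 'a multiset multiset). size A = k \<Longrightarrow> size (sum_mset F) = k * size F"
  by (induction F) (auto simp: size_union)

lemma filter_sum_mset: "filter_mset P (sum_mset F) = sum_mset (image_mset (filter_mset P) F)"
  by (induction F) auto

lemma fact_size_bound:
  assumes "\<forall>A\<in>#F. atom2 r A" shows "2 * size F \<le> size (sum_mset F) + count (sum_mset F) {}"
  using assms
proof (induction F)
  case empty then show ?case by simp
next
  case (add A F)
  then have "2 \<le> size A + count A {}" using atom_size_count0 by auto
  then show ?case using add by simp
qed

lemma filter_sum_all: "\<forall>A\<in>#S. filter_mset P A = A \<Longrightarrow> filter_mset P (sum_mset S) = sum_mset S"
  by (induction S) auto

lemma filter_sum_none: "\<forall>A\<in>#S. filter_mset P A = {#} \<Longrightarrow> filter_mset P (sum_mset S) = {#}"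
  by (induction S) auto

lemma sum_mset_partition: "sum_mset F = sum_mset (filter_mset P F) + sum_mset (filter_mset (\<lambda>x. \<not> P x) F)"
proof -
  have h: "F = filter_mset P F + filter_mset (\<lambda>x. \<not> P x) F" by (rule multiset_partition)
  have "sum_mset F = sum_mset (filter_mset P F + filter_mset (\<lambda>x. \<not> P x) F)"
    by (simp only: h[symmetric])
  then show ?thesis by (simp only: sum_mset.union)
qed

lemma size_partition: "size F = size (filter_mset P F) + size (filter_mset (\<lambda>x. \<not> P x) F)"
proof -
  have h: "F = filter_mset P F + filter_mset (\<lambda>x. \<not> P x) F" by (rule multiset_partition)
  have "size F = size (filter_mset P F + filter_mset (\<lambda>x. \<not> P x) F)"
    by (simp only: h[symmetric])
  then show ?thesis by (simp only: size_union)
qed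

locale UVs =
  fixes r :: nat and B U V :: "nat set multiset"
  assumes U: "atom2 r U" and V: "atom2 r V" and BUV: "B = U + V"
    and U3: "3 \<le> size U" and V3: "3 \<le> size V"
begin

lemma cU: "count U g = (if g \<in># U then 1 else 0)"
proof (cases "g \<in># U")
  case True
  then have "0 < count U g" by simp
  moreover have "count U g \<le> 1" using atom_sqfree[OF U U3, of g] .
  ultimately have "count U g = 1" by linarith
  then show ?thesis using True by simp
next
  case False then show ?thesis by (simp add: not_in_iff)
qed

lemma cV: "count V g = (if g \<in># V then 1 else 0)"
proof (cases "g \<in># V")
  case True
  then have "0 < count V g" by simp
  moreover have "count V g \<le> 1" using atom_sqfree[OF V V3, of g] .
  ultimately have "count V g = 1" by linarith
  then show ?thesis using True by simp
next
  case False then show ?thesis by (simp add: not_in_iff)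
qed

lemma zU: "{} \<notin># U" using atom_zero[OF U] U3 by auto
lemma zV: "{} \<notin># V" using atom_zero[OF V] V3 by auto
lemma zB: "{} \<notin># B" using zU zV BUV by simp

lemma overB: "seq_over r B" using U V BUV by (simp add: atom2_def zero_sum_seq_def)

lemma zsB: "seq_sum B = {}" using U V BUV zs_plus by (simp add: atom2_def zero_sum_seq_def)

lemma cB2: "count B g \<ge> 2 \<Longrightarrow> g \<in># U \<and> g \<in># V"
  using cU[of g] cV[of g] BUV by (auto split: if_splits)

lemma meetsU:
  assumes "X \<subseteq># B" "seq_sum X = {}" "\<forall>g. count X g \<le> 1" "X \<noteq> {#}" "X \<noteq> V"
  shows "\<exists>g\<in>#X. g \<in># U \<and> g \<notin># V"
proof (rule ccontr)
  assume h: "\<not> (\<exists>g\<in>#X. g \<in># U \<and> g \<notin># V)"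
  have "X \<subseteq># V" unfolding subseteq_mset_def
  proof
    fix g show "count X g \<le> count V g"
    proof (cases "g \<in># X")
      case True
      then have "g \<in># B" using assms(1) by (meson mset_subset_eqD)
      then have "g \<in># V" using h True BUV by auto
      then show ?thesis using assms(3) cV[of g] by (metis)
    next
      case False then show ?thesis by (simp add: not_in_iff)
    qed
  qed
  then show False using atom_sub[OF V _ assms(2)] assms(4,5) by blast
qed

lemma meetsV:
  assumes "X \<subseteq># B" "seq_sum X = {}" "\<forall>g. count X g \<le> 1" "X \<noteq> {#}" "X \<noteq> U"
  shows "\<exists>g\<in>#X. g \<in># V \<and> g \<notin># U"
proof (rule ccontr)
  assume h: "\<not> (\<exists>g\<in>#X. g \<in># V \<and> g \<notin># U)"
  have "X \<subseteq># U" unfolding subseteq_mset_def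
  proof
    fix g show "count X g \<le> count U g"
    proof (cases "g \<in># X")
      case True
      then have "g \<in># B" using assms(1) by (meson mset_subset_eqD)
      then have "g \<in># U" using h True BUV by auto
      then show ?thesis using assms(3) cU[of g] by (metis)
    next
      case False then show ?thesis by (simp add: not_in_iff)
    qed
  qed
  then show False using atom_sub[OF U _ assms(2)] assms(4,5) by blast
qed

lemma U_in_F:
  assumes "\<forall>A\<in>#F. atom2 r A" "sum_mset F = B" "U \<in># F" shows "size F = 2"
proof -
  obtain F' where F': "F = add_mset U F'" using assms(3) by (metis insert_DiffM)
  then have "sum_mset F' = V" using assms(2) BUV by simp
  then have "F' = {#V#}" using fact_atom[OF V] assms(1) F' by simp
  then show ?thesis using F' by simp
qed

lemma V_in_F:
  assumes "\<forall>A\<in>#F. atom2 r A" "sum_mset F = B" "V \<in># F" shows "size F = 2"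
proof -
  obtain F' where F': "F = add_mset V F'" using assms(3) by (metis insert_DiffM)
  then have "sum_mset F' = U" using assms(2) BUV by simp
  then have "F' = {#U#}" using fact_atom[OF U] assms(1) F' by simp
  then show ?thesis using F' by simp
qed

lemma construct:
  assumes F: "\<forall>A\<in>#F. atom2 r A" "sum_mset F = B" and nU: "U \<notin># F" and nV: "V \<notin># F"
    and X: "X \<in># F" "3 \<le> size X" and d: "d \<in># X" "d \<in># U" "d \<in># V"
  shows "\<exists>F'. (\<forall>A\<in>#F'. atom2 r A) \<and> sum_mset F' = B \<and> 3 \<le> size F' \<and> size F' \<le> size X"
proof -
  have XA: "atom2 r X" using F X by auto
  have XB: "X \<subseteq># B" using sub_sum_mset[OF X(1)] F(2) by simp
  have cX1: "\<forall>g. count X g \<le> 1" using atom_sqfree[OF XA X(2)] by blast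
  have cX: "count X g = (if g \<in># X then 1 else 0)" for g
  proof (cases "g \<in># X")
    case True
    then have "0 < count X g" by simp
    moreover have "count X g \<le> 1" using cX1 by blast
    ultimately have "count X g = 1" by linarith
    then show ?thesis using True by simp
  next
    case False then show ?thesis by (simp add: not_in_iff)
  qed
  have zX: "seq_sum X = {}" using XA by (simp add: atom2_def zero_sum_seq_def)
  have XnU: "X \<noteq> U" using nU X(1) by auto
  have XnV: "X \<noteq> V" using nV X(1) by auto
  have XinB: "g \<in># U \<or> g \<in># V" if "g \<in># X" for g
    using XB BUV that by (metis mset_subset_eqD union_iff)
  define Y1 where "Y1 = filter_mset (\<lambda>g. g \<notin># X) U + filter_mset (\<lambda>g. g \<notin># U) X"
  define Y2 where "Y2 = filter_mset (\<lambda>g. g \<notin># V) X + filter_mset (\<lambda>g. g \<notin># X) V"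
  define Qm where "Qm = filter_mset (\<lambda>g. g \<in># U \<and> g \<in># V) X"
  have Bdec: "B = (Qm + Qm) + Y1 + Y2"
    unfolding multiset_eq_iff
  proof
    fix g show "count B g = count (Qm + Qm + Y1 + Y2) g"
      using cU[of g] cV[of g] cX[of g] XinB[of g] BUV by (auto simp: Y1_def Y2_def Qm_def)
  qed
  have eqU: "filter_mset (\<lambda>g. g \<in># X) U = filter_mset (\<lambda>g. g \<in># U) X"
    unfolding multiset_eq_iff using cU cX by auto
  have eqV: "filter_mset (\<lambda>g. g \<in># X) V = filter_mset (\<lambda>g. g \<in># V) X"
    unfolding multiset_eq_iff using cV cX by auto
  have zU': "seq_sum U = {}" and zV': "seq_sum V = {}" using U V by (auto simp: atom2_def zero_sum_seq_def)
  have zY1: "seq_sum Y1 = {}"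
  proof -
    have "(i \<in> seq_sum (filter_mset (\<lambda>g. g \<in># X) U)) = (i \<in> seq_sum (filter_mset (\<lambda>g. g \<notin># X) U))" for i
      using part_sum[of i U "\<lambda>g. g \<in># X"] zU' by auto
    moreover have "(i \<in> seq_sum (filter_mset (\<lambda>g. g \<in># U) X)) = (i \<in> seq_sum (filter_mset (\<lambda>g. g \<notin># U) X))" for i
      using part_sum[of i X "\<lambda>g. g \<in># U"] zX by auto
    ultimately show ?thesis unfolding Y1_def using eqU mem_seq_sum_plus by (metis equals0I)
  qed
  have zY2: "seq_sum Y2 = {}"
  proof -
    have "(i \<in> seq_sum (filter_mset (\<lambda>g. g \<in># X) V)) = (i \<in> seq_sum (filter_mset (\<lambda>g. g \<notin># X) V))" for i
      using part_sum[of i V "\<lambda>g. g \<in># X"] zV' by auto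
    moreover have "(i \<in> seq_sum (filter_mset (\<lambda>g. g \<in># V) X)) = (i \<in> seq_sum (filter_mset (\<lambda>g. g \<notin># V) X))" for i
      using part_sum[of i X "\<lambda>g. g \<in># V"] zX by auto
    ultimately show ?thesis unfolding Y2_def using eqV mem_seq_sum_plus by (metis equals0I)
  qed
  have Y1B: "Y1 \<subseteq># B" using Bdec by (metis mset_subset_eq_add_left mset_subset_eq_add_right subset_mset.order_trans add.commute)
  have Y2B: "Y2 \<subseteq># B" using Bdec by (metis mset_subset_eq_add_right)
  have "zero_sum_seq r Y1" using zY1 Y1B overB seq_over_mono by (auto simp: zero_sum_seq_def)
  then obtain G1 where G1: "\<forall>A\<in>#G1. atom2 r A" "sum_mset G1 = Y1" using exists_fact by blast
  have "zero_sum_seq r Y2" using zY2 Y2B overB seq_over_mono by (auto simp: zero_sum_seq_def)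
  then obtain G2 where G2: "\<forall>A\<in>#G2. atom2 r A" "sum_mset G2 = Y2" using exists_fact by blast
  define FQ where "FQ = image_mset (\<lambda>g. {#g, g#}) Qm"
  have FQa: "\<forall>A\<in>#FQ. atom2 r A"
  proof
    fix A assume "A \<in># FQ"
    then obtain g where g: "g \<in># Qm" "A = {#g, g#}" unfolding FQ_def by auto
    then have "g \<in># U" unfolding Qm_def by simp
    then have "g \<noteq> {}" "elem2 r g" using zU U by (auto simp: atom2_def zero_sum_seq_def seq_over_def)
    then show "atom2 r A" using g atom_double by simp
  qed
  have cY1: "count Y1 g \<le> 1" for g using cU[of g] cX[of g] by (auto simp: Y1_def)
  have cY2: "count Y2 g \<le> 1" for g using cV[of g] cX[of g] by (auto simp: Y2_def)
  have dY1: "d \<notin># Y1" using d by (simp add: Y1_def)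
  have dY2: "d \<notin># Y2" using d by (simp add: Y2_def)
  have b1: "\<forall>Z\<in>#G1. \<exists>g\<in>#Z. g \<notin># U"
  proof
    fix Z assume Z: "Z \<in># G1"
    have ZY: "Z \<subseteq># Y1" using sub_sum_mset[OF Z] G1(2) by simp
    have ZA: "atom2 r Z" using G1(1) Z by auto
    have "Z \<subseteq># B" using ZY Y1B by (rule subset_mset.order_trans)
    moreover have "seq_sum Z = {}" using ZA by (simp add: atom2_def zero_sum_seq_def)
    moreover have "\<forall>g. count Z g \<le> 1" using ZY cY1 by (metis mset_subset_eq_count order_trans)
    moreover have "Z \<noteq> {#}" using atom_ne[OF ZA] .
    moreover have "Z \<noteq> U" using ZY dY1 d(2) by (metis mset_subset_eqD)
    ultimately show "\<exists>g\<in>#Z. g \<notin># U" using meetsV by blast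
  qed
  have b2: "\<forall>Z\<in>#G2. \<exists>g\<in>#Z. g \<notin># V"
  proof
    fix Z assume Z: "Z \<in># G2"
    have ZY: "Z \<subseteq># Y2" using sub_sum_mset[OF Z] G2(2) by simp
    have ZA: "atom2 r Z" using G2(1) Z by auto
    have "Z \<subseteq># B" using ZY Y2B by (rule subset_mset.order_trans)
    moreover have "seq_sum Z = {}" using ZA by (simp add: atom2_def zero_sum_seq_def)
    moreover have "\<forall>g. count Z g \<le> 1" using ZY cY2 by (metis mset_subset_eq_count order_trans)
    moreover have "Z \<noteq> {#}" using atom_ne[OF ZA] .
    moreover have "Z \<noteq> V" using ZY dY2 d(3) by (metis mset_subset_eqD)
    ultimately show "\<exists>g\<in>#Z. g \<notin># V" using meetsU by blast
  qed
  have s1: "size G1 \<le> size (filter_mset (\<lambda>g. g \<notin># U) X)"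
  proof -
    have "filter_mset (\<lambda>g. g \<notin># U) Y1 = filter_mset (\<lambda>g. g \<notin># U) X"
      unfolding Y1_def multiset_eq_iff by (auto simp: cU)
    then show ?thesis using count_bound[OF b1] G1(2) by simp
  qed
  have s2: "size G2 \<le> size (filter_mset (\<lambda>g. g \<notin># V) X)"
  proof -
    have "filter_mset (\<lambda>g. g \<notin># V) Y2 = filter_mset (\<lambda>g. g \<notin># V) X"
      unfolding Y2_def multiset_eq_iff by (auto simp: cV)
    then show ?thesis using count_bound[OF b2] G2(2) by simp
  qed
  have Xdec: "X = Qm + filter_mset (\<lambda>g. g \<notin># U) X + filter_mset (\<lambda>g. g \<notin># V) X"
    unfolding multiset_eq_iff
  proof
    fix g show "count X g = count (Qm + filter_mset (\<lambda>g. g \<notin># U) X + filter_mset (\<lambda>g. g \<notin># V) X) g"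
      using cX[of g] XinB[of g] by (auto simp: Qm_def)
  qed
  define F' where "F' = FQ + G1 + G2"
  have "sum_mset F' = B" unfolding F'_def FQ_def using sum_mset_doubles G1(2) G2(2) Bdec by simp
  moreover have "\<forall>A\<in>#F'. atom2 r A" unfolding F'_def using FQa G1(1) G2(1) by auto
  moreover have "size F' \<le> size X"
  proof -
    have "size X = size Qm + size (filter_mset (\<lambda>g. g \<notin># U) X) + size (filter_mset (\<lambda>g. g \<notin># V) X)"
      using Xdec by (metis size_union)
    then show ?thesis unfolding F'_def FQ_def using s1 s2 by simp
  qed
  moreover have "3 \<le> size F'"
  proof -
    have "d \<in># Qm" using d by (simp add: Qm_def)
    then have "Qm \<noteq> {#}" by auto
    then have "0 < size Qm" using nonempty_has_size by blast
    then have q: "1 \<le> size Qm" by simp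
    obtain g1 where "g1 \<in># X" "g1 \<notin># U"
      using meetsV[OF XB zX cX1 _ XnU] atom_ne[OF XA] by blast
    then have "g1 \<in># Y1" by (simp add: Y1_def)
    then have "G1 \<noteq> {#}" using G1(2) by auto
    then have "0 < size G1" using nonempty_has_size by blast
    then have g1: "1 \<le> size G1" by simp
    obtain g2 where "g2 \<in># X" "g2 \<notin># V"
      using meetsU[OF XB zX cX1 _ XnV] atom_ne[OF XA] by blast
    then have "g2 \<in># Y2" by (simp add: Y2_def)
    then have "G2 \<noteq> {#}" using G2(2) by auto
    then have "0 < size G2" using nonempty_has_size by blast
    then have g2: "1 \<le> size G2" by simp
    show ?thesis unfolding F'_def FQ_def using q g1 g2 by simp
  qed
  ultimately show ?thesis by blast
qed

lemma noD:
  assumes r6: "6 \<le> r" and nB: "size B \<le> 2 * r + 2"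
    and hlen: "\<forall>F'. (\<forall>A\<in>#F'. atom2 r A) \<and> sum_mset F' = B \<longrightarrow> size F' = 2 \<or> r - 1 \<le> size F'"
    and F: "\<forall>A\<in>#F. atom2 r A" "sum_mset F = B" and nU: "U \<notin># F" and nV: "V \<notin># F"
    and sF: "r - 1 \<le> size F"
    and X: "X \<in># F" "3 \<le> size X" and d: "d \<in># X" "d \<in># U" "d \<in># V"
  shows False
proof -
  have small: False if Yh: "Y \<in># F" "3 \<le> size Y" "size Y \<le> 4" "d \<in># Y" for Y
  proof -
    obtain F' where F': "\<forall>A\<in>#F'. atom2 r A" "sum_mset F' = B" "3 \<le> size F'" "size F' \<le> size Y"
      using construct[OF F nU nV Yh(1,2,4) d(2,3)] by blast
    have "size F' = 2 \<or> r - 1 \<le> size F'" using hlen F'(1,2) by blast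
    then show False using F'(3,4) Yh(3) r6 by linarith
  qed
  have "\<not> size X \<le> 4" using small[OF X(1) X(2) _ d(1)] by blast
  then have X5: "5 \<le> size X" by linarith
  obtain F0 where F0: "F = add_mset X F0" using X(1) by (metis insert_DiffM)
  have XA: "atom2 r X" using F X by auto
  have "0 < count X d" using d(1) by simp
  moreover have "count X d \<le> 1" using atom_sqfree[OF XA X(2), of d] .
  ultimately have cXd: "count X d = 1" by linarith
  have cBd: "count B d = 2" using cU[of d] cV[of d] d BUV by simp
  have "count B d = count X d + count (sum_mset F0) d" using F(2) F0 by auto
  then have "count (sum_mset F0) d = 1" using cXd cBd by simp
  then have "0 < count (sum_mset F0) d" by simp
  then have "d \<in># sum_mset F0" by simp
  then obtain Y where Y: "Y \<in># F0" "d \<in># Y" using in_sum_mset_ex by blast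
  have YF: "Y \<in># F" using Y F0 by simp
  have YA: "atom2 r Y" using F YF by auto
  obtain F1 where F1: "F0 = add_mset Y F1" using Y(1) by (metis insert_DiffM)
  have BXY: "B = X + Y + sum_mset F1" using F(2) F0 F1 by (simp add: add.assoc)
  have Y2: "size Y \<noteq> 2"
  proof
    assume "size Y = 2"
    then obtain g where "Y = {#g, g#}" using atom_size2[OF YA] by blast
    then have "count Y d = 2" using Y(2) by auto
    then have "count B d \<ge> 3" using BXY cXd by simp
    then show False using cBd by simp
  qed
  have "{} \<notin># Y" using zB BXY by auto
  then have "size Y \<noteq> 1" using atom_size1[OF YA] by auto
  moreover have "size Y \<noteq> 0" using atom_ne[OF YA] by simp
  ultimately have Y3: "3 \<le> size Y" using Y2 by arith
  have "\<not> size Y \<le> 4" using small[OF YF Y3 _ Y(2)] by blast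
  then have Y5: "5 \<le> size Y" by linarith
  have "2 * size F1 \<le> size (sum_mset F1) + count (sum_mset F1) {}"
    using fact_size_bound F F0 F1 by auto
  moreover have "{} \<notin># sum_mset F1" using zB BXY by auto
  then have "count (sum_mset F1) {} = 0" by (simp only: not_in_iff)
  moreover have "size F1 + 2 = size F" using F0 F1 by simp
  ultimately have "size B \<ge> 2 * r + 4" using BXY X5 Y5 sF r6 by simp
  then show False using nB by simp
qed

lemma final:
  assumes r6: "6 \<le> r" and nB: "size B \<le> 2 * r + 2"
    and hlen: "\<forall>F'. (\<forall>A\<in>#F'. atom2 r A) \<and> sum_mset F' = B \<longrightarrow> size F' = 2 \<or> r - 1 \<le> size F'"
    and Fr: "\<forall>A\<in>#Fr. atom2 r A" "sum_mset Fr = B" "size Fr = r"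
    and Fs: "\<forall>A\<in>#Fs. atom2 r A" "sum_mset Fs = B" "size Fs = r - 1"
  shows False
proof -
  define Dp where "Dp = (\<lambda>g. g \<in># U \<and> g \<in># V)"
  have key: "filter_mset Dp B = sum_mset (filter_mset (\<lambda>A. size A = 2) F) \<and>
             filter_mset (\<lambda>g. \<not> Dp g) B = sum_mset (filter_mset (\<lambda>A. size A \<noteq> 2) F) \<and>
             (\<forall>A\<in>#F. 2 \<le> size A)"
    if F: "\<forall>A\<in>#F. atom2 r A" "sum_mset F = B" "r - 1 \<le> size F" for F
  proof -
    have nU: "U \<notin># F" using U_in_F[OF F(1,2)] F(3) r6 by auto
    have nV: "V \<notin># F" using V_in_F[OF F(1,2)] F(3) r6 by auto
    have ge2: "2 \<le> size A" if "A \<in># F" for A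
    proof -
      have A: "atom2 r A" using F that by auto
      have "{} \<notin># A" using zB sub_sum_mset[OF that] F(2) by (metis mset_subset_eqD)
      then show ?thesis using atom_size_count0[OF A] by (simp add: not_in_iff)
    qed
    have sq: "filter_mset Dp A = A" if sA: "A \<in># F" "size A = 2" for A
    proof -
      have "atom2 r A" using F sA by auto
      then obtain g where g: "A = {#g, g#}" using atom_size2 sA(2) by blast
      have "A \<subseteq># B" using sub_sum_mset[OF sA(1)] F(2) by simp
      then have "count A g \<le> count B g" by (rule mset_subset_eq_count)
      then have "count B g \<ge> 2" using g by simp
      then have "Dp g" using cB2 Dp_def by simp
      then show ?thesis using g by simp
    qed
    have ns: "filter_mset Dp A = {#}" if "A \<in># F" "size A \<noteq> 2" for A
    proof -
      have "3 \<le> size A" using ge2[OF that(1)] that(2) by simp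
      then have "\<not> Dp g" if "g \<in># A" for g
        using noD[OF r6 nB hlen F(1,2) nU nV F(3) \<open>A \<in># F\<close>] that Dp_def by blast
      then show ?thesis by (auto simp: filter_mset_eq_conv)
    qed
    have Sq: "\<forall>A\<in>#filter_mset (\<lambda>A. size A = 2) F. filter_mset Dp A = A" using sq by auto
    have Sq': "\<forall>A\<in>#filter_mset (\<lambda>A. size A = 2) F. filter_mset (\<lambda>g. \<not> Dp g) A = {#}"
    proof
      fix A assume "A \<in># filter_mset (\<lambda>A. size A = 2) F"
      then have "filter_mset Dp A = A" using sq by auto
      then have "filter_mset (\<lambda>g. \<not> Dp g) A = filter_mset (\<lambda>g. \<not> Dp g) (filter_mset Dp A)" by simp
      then show "filter_mset (\<lambda>g. \<not> Dp g) A = {#}" by simp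
    qed
    have Ns: "\<forall>A\<in>#filter_mset (\<lambda>A. size A \<noteq> 2) F. filter_mset Dp A = {#}" using ns by auto
    have Ns': "\<forall>A\<in>#filter_mset (\<lambda>A. size A \<noteq> 2) F. filter_mset (\<lambda>g. \<not> Dp g) A = A"
    proof
      fix A assume "A \<in># filter_mset (\<lambda>A. size A \<noteq> 2) F"
      then have h1: "filter_mset Dp A = {#}" using ns by auto
      have h2: "A = filter_mset Dp A + filter_mset (\<lambda>g. \<not> Dp g) A" by (rule multiset_partition)
      show "filter_mset (\<lambda>g. \<not> Dp g) A = A" using h2 unfolding h1 by simp
    qed
    have Fsplit: "B = sum_mset (filter_mset (\<lambda>A. size A = 2) F) + sum_mset (filter_mset (\<lambda>A. size A \<noteq> 2) F)"
      using F(2) sum_mset_partition[of F "\<lambda>A. size A = 2"] by simp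
    have "filter_mset Dp B = sum_mset (filter_mset (\<lambda>A. size A = 2) F)"
      using Fsplit filter_sum_all[OF Sq] filter_sum_none[OF Ns] by simp
    moreover have "filter_mset (\<lambda>g. \<not> Dp g) B = sum_mset (filter_mset (\<lambda>A. size A \<noteq> 2) F)"
      using Fsplit filter_sum_all[OF Ns'] filter_sum_none[OF Sq'] by simp
    ultimately show ?thesis using ge2 by blast
  qed
  define SR where "SR = filter_mset (\<lambda>A. size A = 2) Fr"
  define NR where "NR = filter_mset (\<lambda>A. size A \<noteq> 2) Fr"
  define SS where "SS = filter_mset (\<lambda>A. size A = 2) Fs"
  define NS where "NS = filter_mset (\<lambda>A. size A \<noteq> 2) Fs"
  have kR: "filter_mset Dp B = sum_mset SR" "filter_mset (\<lambda>g. \<not> Dp g) B = sum_mset NR" "\<forall>A\<in>#Fr. 2 \<le> size A"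
    using key[OF Fr(1,2)] Fr(3) unfolding SR_def NR_def by auto
  have kS: "filter_mset Dp B = sum_mset SS" "filter_mset (\<lambda>g. \<not> Dp g) B = sum_mset NS" "\<forall>A\<in>#Fs. 2 \<le> size A"
    using key[OF Fs(1,2)] Fs(3) unfolding SS_def NS_def by auto
  have hR: "size (sum_mset SR) = 2 * size SR" by (rule size_sum_mset_eq) (simp add: SR_def)
  have hS: "size (sum_mset SS) = 2 * size SS" by (rule size_sum_mset_eq) (simp add: SS_def)
  have e: "sum_mset SR = sum_mset SS" using kR(1) kS(1) by simp
  have "2 * size SR = 2 * size SS" using hR hS e by metis
  then have sS: "size SR = size SS" by simp
  have szR: "size Fr = size SR + size NR" unfolding SR_def NR_def by (rule size_partition)
  have szS: "size Fs = size SS + size NS" unfolding SS_def NS_def by (rule size_partition)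
  define P where "P = filter_mset (\<lambda>g. \<not> Dp g) B"
  have PR: "sum_mset NR = P" and PS: "sum_mset NS = P" using kR kS P_def by auto
  have "\<forall>A\<in>#NR. 3 \<le> size A" using kR(3) unfolding NR_def by force
  then have m3: "3 * size NR \<le> size P" using size_sum_mset_ge PR by metis
  have "size B = size (filter_mset Dp B) + size P" unfolding P_def by (rule size_partition)
  then have szB: "size B = 2 * size SR + size P" using kR(1) hR by metis
  have mm: "size NR = size NS + 1" using szR szS sS Fr(3) Fs(3) r6 by simp
  have le2: "size NR \<le> 2" using szB nB m3 szR Fr(3) by linarith
  have ne0: "size NS \<noteq> 0"
  proof
    assume "size NS = 0"
    then have "NS = {#}" by simp
    then have "size P = 0" using PS by simp
    then show False using m3 mm by simp
  qed
  have n1: "size NS = 1" using le2 ne0 mm by linarith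
  have n2: "size NR = 2" using le2 ne0 mm by linarith
  obtain X where X: "NS = {#X#}" using n1 size_1_singleton_mset by blast
  obtain W1 NR' where W1: "NR = add_mset W1 NR'" using n2
    by (metis size_eq_Suc_imp_eq_union Suc_1 add_mset_add_single)
  then have "size NR' = 1" using n2 by simp
  then obtain W2 where W2: "NR' = {#W2#}" using size_1_singleton_mset by blast
  have XP: "X = P" using PS X by simp
  have WP: "W1 + W2 = P" using PR W1 W2 by simp
  have XA: "atom2 r X" using Fs(1) X unfolding NS_def by (metis filter_mset_add_mset in_multiset_in_set mset_subset_eqD multiset_filter_subset union_single_eq_member)
  have W1A: "atom2 r W1" using Fr(1) W1 unfolding NR_def by (metis mset_subset_eqD multiset_filter_subset union_single_eq_member add_mset_add_single)
  have W2A: "atom2 r W2" using Fr(1) W1 W2 unfolding NR_def by (metis mset_subset_eqD multiset_filter_subset union_single_eq_member add_mset_add_single union_iff)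
  have "W1 \<subseteq># X" using XP WP by auto
  moreover have "seq_sum W1 = {}" using W1A by (simp add: atom2_def zero_sum_seq_def)
  ultimately have "W1 = {#} \<or> W1 = X" using atom_sub[OF XA] by blast
  moreover have "W1 \<noteq> {#}" using atom_ne[OF W1A] .
  moreover have "W2 \<noteq> {#}" using atom_ne[OF W2A] .
  ultimately show False using XP WP by auto
qed

end


lemma atom_count0: "atom2 r A \<Longrightarrow> count A {} \<le> 1"
  by (cases "{} \<in># A") (auto dest: atom_zero simp: not_in_iff)

lemma Lset_mem: "k \<in> Lset r B \<longleftrightarrow> (\<exists>F. size F = k \<and> (\<forall>A\<in>#F. atom2 r A) \<and> sum_mset F = B)"
  by (simp add: Lset_def)

lemma no_big:
  assumes r6: "6 \<le> r" and L: "Lset r B = {2, r - 1, r}"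
  shows False
proof -
  have "2 \<in> Lset r B" using L by simp
  then obtain F2 where F2: "size F2 = 2" "\<forall>A\<in>#F2. atom2 r A" "sum_mset F2 = B" using Lset_mem by blast
  obtain U F2' where "F2 = add_mset U F2'" using F2(1)
    by (metis size_eq_Suc_imp_eq_union Suc_1 add_mset_add_single)
  moreover then have "size F2' = 1" using F2(1) by simp
  moreover then obtain V where "F2' = {#V#}" using size_1_singleton_mset by blast
  ultimately have F2UV: "F2 = {#U, V#}" by simp
  have U: "atom2 r U" and V: "atom2 r V" using F2(2) F2UV by auto
  have BUV: "B = U + V" using F2(3) F2UV by simp
  have "r \<in> Lset r B" using L by simp
  then obtain Fr where Fr: "size Fr = r" "\<forall>A\<in>#Fr. atom2 r A" "sum_mset Fr = B" using Lset_mem by blast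
  have "r - 1 \<in> Lset r B" using L by simp
  then obtain Fs where Fs: "size Fs = r - 1" "\<forall>A\<in>#Fs. atom2 r A" "sum_mset Fs = B" using Lset_mem by blast
  have hlen: "\<forall>F'. (\<forall>A\<in>#F'. atom2 r A) \<and> sum_mset F' = B \<longrightarrow> size F' = 2 \<or> r - 1 \<le> size F'"
  proof (intro allI impI)
    fix F' assume "(\<forall>A\<in>#F'. atom2 r A) \<and> sum_mset F' = B"
    then have "size F' \<in> Lset r B" using Lset_mem by blast
    then show "size F' = 2 \<or> r - 1 \<le> size F'" using L by auto
  qed
  have sU: "size U \<le> Suc r" using davenport[OF U] .
  have sV: "size V \<le> Suc r" using davenport[OF V] .
  have nB: "size B \<le> 2 * r + 2" using sU sV BUV by simp
  have lb: "2 * r \<le> size B + count B {}" using fact_size_bound[OF Fr(2)] Fr(1,3) by simp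
  have "count B {} = 0"
  proof (rule ccontr)
    assume "count B {} \<noteq> 0"
    then have "{} \<in># U \<or> {} \<in># V" using BUV by (auto simp: not_in_iff[symmetric])
    then have "size U = 1 \<or> size V = 1" using atom_zero[OF U] atom_zero[OF V] by auto
    then have "size B \<le> r + 2" using sU sV BUV by auto
    moreover have "count B {} \<le> 2" using atom_count0[OF U] atom_count0[OF V] BUV by simp
    ultimately show False using lb r6 by linarith
  qed
  then have lb2: "2 * r \<le> size B" using lb by simp
  have U3: "3 \<le> size U" using lb2 sV BUV r6 by simp
  have V3: "3 \<le> size V" using lb2 sU BUV r6 by simp
  interpret UVs r B U V using U V BUV U3 V3 by unfold_locales
  show False using final[OF r6 nB hlen Fr(2,3,1) Fs(2,3,1)] .
qed


fun tri :: "nat set list \<Rightarrow> bool" where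
  "tri [] = True"
| "tri (y # ys) = ((\<exists>c\<in>y. \<forall>z\<in>set ys. c \<notin> z) \<and> tri ys)"

lemma tri_nz:
  "tri ys \<Longrightarrow> distinct ys \<Longrightarrow> Z \<subseteq># mset ys \<Longrightarrow> Z \<noteq> {#} \<Longrightarrow> seq_sum Z \<noteq> {}"
proof (induction ys arbitrary: Z)
  case Nil then show ?case by simp
next
  case (Cons y ys)
  show ?case
  proof (cases "y \<in># Z")
    case True
    obtain c where c: "c \<in> y" "\<forall>z\<in>set ys. c \<notin> z" using Cons.prems(1) by auto
    define Z' where "Z' = Z - {#y#}"
    have Z: "Z = add_mset y Z'" using True Z'_def by simp
    have "Z' \<subseteq># mset ys" using Cons.prems(3) Z by simp
    then have "\<forall>z\<in>#Z'. c \<notin> z" using c(2) by (meson in_multiset_in_set mset_subset_eqD)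
    then have "\<forall>x. count (filter_mset (\<lambda>g. c \<in> g) Z') x = 0"
    proof (intro allI)
      fix x show "count (filter_mset (\<lambda>g. c \<in> g) Z') x = 0"
      proof (cases "c \<in> x")
        case True then have "x \<notin># Z'" using \<open>\<forall>z\<in>#Z'. c \<notin> z\<close> by blast
        then show ?thesis using True by (simp add: not_in_iff)
      next
        case False then show ?thesis by simp
      qed
    qed
    then have e: "filter_mset (\<lambda>g. c \<in> g) Z' = {#}" by (simp add: multiset_eq_iff)
    have "c \<notin> seq_sum Z'" unfolding mem_seq_sum e by simp
    then have "c \<in> seq_sum Z" using Z c(1) mem_seq_sum_add by blast
    then show ?thesis by auto
  next
    case False
    then have "Z \<subseteq># mset ys" using Cons.prems(3) subset_add_mset_notin by simp
    then show ?thesis using Cons by simp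
  qed
qed


lemma tri_atom:
  assumes "distinct (y0 # ys)" "\<forall>y\<in>set (y0 # ys). elem2 r y" "seq_sum (mset (y0 # ys)) = {}" "tri ys"
  shows "atom2 r (mset (y0 # ys))"
  unfolding atom2_def
proof (intro conjI allI impI)
  show "zero_sum_seq r (mset (y0 # ys))" using assms(2,3) by (simp add: zero_sum_seq_def seq_over_def)
  show "mset (y0 # ys) \<noteq> {#}" by simp
  fix P Q assume h: "mset (y0 # ys) = P + Q \<and> zero_sum_seq r P \<and> zero_sum_seq r Q"
  have dy: "distinct ys" "y0 \<notin> set ys" using assms(1) by auto
  have m: "add_mset y0 (mset ys) = P + Q" using h by simp
  have "count (mset ys) y0 = 0" using dy(2) by (simp add: count_mset_0_iff)
  then have "count (add_mset y0 (mset ys)) y0 = 1" by simp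
  then have c1: "count P y0 + count Q y0 = 1" unfolding m by simp
  have PQ: "P \<subseteq># add_mset y0 (mset ys)" "Q \<subseteq># add_mset y0 (mset ys)" unfolding m by simp_all
  have zP: "seq_sum P = {}" and zQ: "seq_sum Q = {}" using h by (simp_all add: zero_sum_seq_def)
  show "P = {#} \<or> Q = {#}"
  proof (cases "count P y0 = 0")
    case True
    then have "y0 \<notin># P" by (simp add: not_in_iff)
    then have "P \<subseteq># mset ys" using subset_add_mset_notin[OF PQ(1)] by blast
    then have "P = {#}" using tri_nz[OF assms(4) dy(1)] zP by blast
    then show ?thesis by simp
  next
    case False
    then have "count Q y0 = 0" using c1 by linarith
    then have "y0 \<notin># Q" by (simp add: not_in_iff)
    then have "Q \<subseteq># mset ys" using subset_add_mset_notin[OF PQ(2)] by blast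
    then have "Q = {#}" using tri_nz[OF assms(4) dy(1)] zQ by blast
    then show ?thesis by simp
  qed
qed




definition key :: "nat set \<Rightarrow> bool list" where "key A = [0 \<in> A, 1 \<in> A, 2 \<in> A, 3 \<in> A, 4 \<in> A]"

lemma key_inj: assumes "A \<subseteq> {..<5}" "B \<subseteq> {..<5}" shows "(A = B) = (key A = key B)"
proof
  assume "key A = key B"
  then have h: "\<forall>i\<in>{0,1,2,3,4::nat}. (i \<in> A) = (i \<in> B)" by (simp add: key_def)
  have "{..<5::nat} = {0,1,2,3,4}" by auto
  then show "A = B" using h assms by blast
qed simp

lemma tri_atom5:
  assumes "distinct (map key (y0 # ys))" "\<forall>y\<in>set (y0 # ys). elem2 r y" "seq_sum (mset (y0 # ys)) = {}" "tri ys"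
  shows "atom2 r (mset (y0 # ys))"
  using tri_atom[of y0 ys r] assms distinct_map by blast

abbreviation "U5 \<equiv> mset [{0,1,2,3,4}, {0}, {1}, {2}, {3}, {4::nat}]"
abbreviation "V5 \<equiv> mset [{2,3,4}, {0,1,4}, {0}, {1}, {2}, {3::nat}]"

lemma U5: "atom2 5 U5"
  by (rule tri_atom5) (simp_all add: key_def elem2_def seq_sum_def)

lemma V5: "atom2 5 V5"
  by (rule tri_atom5) (simp_all add: key_def elem2_def seq_sum_def)

lemma all_size2:
  "\<forall>A\<in>#(F :: 'a multiset multiset). 2 \<le> size A \<Longrightarrow> size (sum_mset F) = 2 * size F \<Longrightarrow> \<forall>A\<in>#F. size A = 2"
proof (induction F)
  case empty then show ?case by simp
next
  case (add A F)
  have pF: "\<forall>A\<in>#F. 2 \<le> size A" using add.prems(1) by simp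
  have h1: "2 * size F \<le> size (sum_mset F)" using size_sum_mset_ge[OF pF] .
  have h2: "2 \<le> size A" using add.prems(1) by simp
  have "size (sum_mset (add_mset A F)) = size A + size (sum_mset F)" by (simp add: size_union)
  moreover have "size (add_mset A F) = Suc (size F)" by simp
  ultimately have h3: "size A + size (sum_mset F) = 2 + 2 * size F" using add.prems(2) by linarith
  have e1: "size A = 2" using h1 h2 h3 by linarith
  have e2: "size (sum_mset F) = 2 * size F" using h1 h2 h3 by linarith
  have "\<forall>A\<in>#F. size A = 2" using add.IH pF e2 by blast
  then show ?case using e1 by simp
qed

lemma L_upper:
  assumes "{} \<notin># B" "k \<in> Lset r B" shows "2 * k \<le> size B"
proof -
  obtain F where F: "size F = k" "\<forall>A\<in>#F. atom2 r A" "sum_mset F = B" using assms(2) Lset_mem by blast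
  have "count B {} = 0" using assms(1) by (simp add: not_in_iff)
  then show ?thesis using fact_size_bound[OF F(2)] F by simp
qed

lemma L_not0: "B \<noteq> {#} \<Longrightarrow> 0 \<notin> Lset r B"
  by (auto simp: Lset_mem)

lemma L_not1:
  assumes "B = P + Q" "zero_sum_seq r P" "zero_sum_seq r Q" "P \<noteq> {#}" "Q \<noteq> {#}"
  shows "1 \<notin> Lset r B"
proof
  assume "1 \<in> Lset r B"
  then obtain F where F: "size F = 1" "\<forall>A\<in>#F. atom2 r A" "sum_mset F = B" using Lset_mem by blast
  then obtain A where "F = {#A#}" using size_1_singleton_mset by blast
  then have "atom2 r B" using F by simp
  then show False using assms unfolding atom2_def by blast
qed

lemma L_not_half:
  assumes "{} \<notin># B" "size B = 2 * k" "x \<in># B" "count B x = 1"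
  shows "k \<notin> Lset r B"
proof
  assume "k \<in> Lset r B"
  then obtain F where F: "size F = k" "\<forall>A\<in>#F. atom2 r A" "sum_mset F = B" using Lset_mem by blast
  have ge2: "\<forall>A\<in>#F. 2 \<le> size A"
  proof
    fix A assume A: "A \<in># F"
    have "{} \<notin># A" using assms(1) sub_sum_mset[OF A] F(3) by (metis mset_subset_eqD)
    then show "2 \<le> size A" using atom_size_count0[of r A] F(2) A by (simp add: not_in_iff)
  qed
  have s2: "\<forall>A\<in>#F. size A = 2" using all_size2[OF ge2] F assms(2) by simp
  obtain A where A: "A \<in># F" "x \<in># A" using in_sum_mset_ex assms(3) F(3) by blast
  then obtain g where "A = {#g, g#}" using atom_size2[of r A] F(2) s2 by blast
  then have "count A x = 2" using A(2) by auto
  moreover have "count A x \<le> count B x" using sub_sum_mset[OF A(1)] F(3) by (simp add: mset_subset_eq_count)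
  ultimately show False using assms(4) by simp
qed

lemma Lset_in: "(\<forall>A\<in>#F. atom2 r A) \<Longrightarrow> sum_mset F = B \<Longrightarrow> size F \<in> Lset r B"
  using Lset_mem by blast

lemma dbl: "g \<noteq> {} \<Longrightarrow> g \<subseteq> {..<r} \<Longrightarrow> atom2 r {#g, g#}"
  using atom_double by (simp add: elem2_def)

subsection \<open>r = 3\<close>

abbreviation "U3 \<equiv> mset [{0,1}, {0}, {1::nat}]"

lemma U3: "atom2 3 U3"
  by (rule tri_atom5) (simp_all add: key_def elem2_def seq_sum_def)

lemma ex3: "Lset 3 (U3 + U3) = {2, 3}"
proof
  have B: "{} \<notin># U3 + U3" by simp
  show "Lset 3 (U3 + U3) \<subseteq> {2, 3}"
  proof
    fix k assume k: "k \<in> Lset 3 (U3 + U3)"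
    have "2 * k \<le> 6" using L_upper[OF B k] by simp
    moreover have "k \<noteq> 0"
    proof
      assume "k = 0"
      then have "0 \<in> Lset 3 (U3 + U3)" using k by simp
      then show False using L_not0[of "U3 + U3" 3] by simp
    qed
    moreover have "k \<noteq> 1" using L_not1[of "U3 + U3" U3 U3 3] k U3 atom_zs atom_ne by blast
    ultimately show "k \<in> {2, 3}" by auto
  qed
  have "size {#U3, U3#} \<in> Lset 3 (U3 + U3)" by (rule Lset_in) (use U3 in auto)
  then have "2 \<in> Lset 3 (U3 + U3)" by (simp add: eval_nat_numeral)
  moreover have "size {#{#{0::nat},{0}#}, {#{1},{1}#}, {#{0,1},{0,1}#}#} \<in> Lset 3 (U3 + U3)"
    by (rule Lset_in) (auto intro!: dbl simp: add_mset_commute)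
  then have "3 \<in> Lset 3 (U3 + U3)" by (simp add: eval_nat_numeral)
  ultimately show "{2, 3} \<subseteq> Lset 3 (U3 + U3)" by simp
qed

subsection \<open>r = 4\<close>

abbreviation "U4 \<equiv> mset [{0,1,2,3}, {0}, {1}, {2}, {3::nat}]"
abbreviation "V4 \<equiv> mset [{2,3}, {0,1,3}, {0}, {1}, {2::nat}]"

lemma U4: "atom2 4 U4"
  by (rule tri_atom5) (simp_all add: key_def elem2_def seq_sum_def)

lemma V4: "atom2 4 V4"
  by (rule tri_atom5) (simp_all add: key_def elem2_def seq_sum_def)

lemma X41: "atom2 4 (mset [{0,1,3}, {0}, {1}, {3::nat}])"
  by (rule tri_atom5) (simp_all add: key_def elem2_def seq_sum_def)

lemma X42: "atom2 4 (mset [{0,1,2,3}, {2,3}, {0}, {1::nat}])"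
  by (rule tri_atom5) (simp_all add: key_def elem2_def seq_sum_def)

lemma W4: "atom2 4 (mset [{0,1,2,3}, {0,1,3}, {2,3}, {3::nat}])"
  by (rule tri_atom5) (simp_all add: key_def elem2_def seq_sum_def)

lemma ex4: "Lset 4 (U4 + V4) = {2, 3, 4}"
proof
  have B: "{} \<notin># U4 + V4" by simp
  show "Lset 4 (U4 + V4) \<subseteq> {2, 3, 4}"
  proof
    fix k assume k: "k \<in> Lset 4 (U4 + V4)"
    have "2 * k \<le> 10" using L_upper[OF B k] by simp
    moreover have "k \<noteq> 0"
    proof
      assume "k = 0"
      then have "0 \<in> Lset 4 (U4 + V4)" using k by simp
      then show False using L_not0[of "U4 + V4" 4] by simp
    qed
    moreover have "k \<noteq> 1" using L_not1[of "U4 + V4" U4 V4 4] k U4 V4 atom_zs atom_ne by blast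
    moreover have "k \<noteq> 5"
    proof
      assume "k = 5"
      have "count (U4 + V4) {3} = 1" by (simp add: key_inj key_def)
      then have "5 \<notin> Lset 4 (U4 + V4)" using L_not_half[OF B, of 5 "{3}"] by simp
      then show False using k \<open>k = 5\<close> by simp
    qed
    ultimately show "k \<in> {2, 3, 4}" by auto
  qed
  have "size {#U4, V4#} \<in> Lset 4 (U4 + V4)" by (rule Lset_in) (use U4 V4 in auto)
  then have "2 \<in> Lset 4 (U4 + V4)" by (simp add: eval_nat_numeral)
  moreover have "size {#mset [{0,1,3}, {0}, {1}, {3::nat}], mset [{0,1,2,3}, {2,3}, {0}, {1::nat}], {#{2},{2}#}#} \<in> Lset 4 (U4 + V4)"
    by (rule Lset_in) (use X41 X42 in \<open>auto intro!: dbl simp: add_mset_commute\<close>)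
  then have "3 \<in> Lset 4 (U4 + V4)" by (simp add: eval_nat_numeral)
  moreover have "size {#mset [{0,1,2,3}, {0,1,3}, {2,3}, {3::nat}], {#{0},{0}#}, {#{1},{1}#}, {#{2},{2}#}#} \<in> Lset 4 (U4 + V4)"
    by (rule Lset_in) (use W4 in \<open>auto intro!: dbl simp: add_mset_commute\<close>)
  then have "4 \<in> Lset 4 (U4 + V4)" by (simp add: eval_nat_numeral)
  ultimately show "{2, 3, 4} \<subseteq> Lset 4 (U4 + V4)" by simp
qed

subsection \<open>r = 5\<close>

lemma size_sum_mset_le: "\<forall>A\<in>#(F :: 'a multiset multiset). size A \<le> k \<Longrightarrow> size (sum_mset F) \<le> k * size F"
  by (induction F) (auto simp: size_union)

lemma sum_card_cnt:
  assumes "finite I" shows "sum_mset (image_mset (\<lambda>h. card (h \<inter> I)) M) = (\<Sum>i\<in>I. cnt i M)"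
proof (induction M)
  case empty then show ?case by simp
next
  case (add h M)
  have e: "(\<Sum>i\<in>I. (if i \<in> h then 1 else 0::nat)) = card (h \<inter> I)"
    using assms by (simp add: sum.If_cases Int_commute)
  have "(\<Sum>i\<in>I. cnt i (add_mset h M)) = (\<Sum>i\<in>I. cnt i M + (if i \<in> h then 1 else 0))"
    by (rule sum.cong) auto
  also have "\<dots> = (\<Sum>i\<in>I. cnt i M) + card (h \<inter> I)" using e by (simp add: sum.distrib)
  finally show ?case using add by simp
qed

lemma even_sum_cnt: "seq_sum M = {} \<Longrightarrow> even (\<Sum>i\<in>I. cnt i M)"
  by (rule dvd_sum) (simp add: zs_iff)

lemma sum_image_partition:
  "sum_mset (image_mset f M) = sum_mset (image_mset f (filter_mset P M)) + sum_mset (image_mset f (filter_mset (\<lambda>x. \<not> P x) M))"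
  by (induction M) (auto simp: ac_simps)

lemma sum_mset_ones: "\<forall>h\<in>#M. f h = (1::nat) \<Longrightarrow> sum_mset (image_mset f M) = size M"
  by (induction M) auto

lemma sum_mset_even: "\<forall>h\<in>#M. even (f h :: nat) \<Longrightarrow> even (sum_mset (image_mset f M))"
  by (induction M) auto

abbreviation "Y51 \<equiv> mset [{2,3,4}, {2}, {3}, {4::nat}]"
abbreviation "Y52 \<equiv> mset [{0,1,4}, {0,1,2,3,4}, {2}, {3::nat}]"
abbreviation "W5 \<equiv> mset [{0,1,2,3,4}, {0,1,4}, {2,3,4}, {4::nat}]"

lemma Y51: "atom2 5 Y51"
  by (rule tri_atom5) (simp_all add: key_def elem2_def seq_sum_def)

lemma Y52: "atom2 5 Y52"
  by (rule tri_atom5) (simp_all add: key_def elem2_def seq_sum_def)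

lemma W5: "atom2 5 W5"
  by (rule tri_atom5) (simp_all add: key_def elem2_def seq_sum_def)

lemma P5: "g \<in># U5 \<Longrightarrow> g \<notin># V5 \<Longrightarrow> 4 \<in> g \<and> (0 \<in> g \<longleftrightarrow> 2 \<in> g)"
  by auto

lemma filt5: "filter_mset (\<lambda>h. 4 \<in> h) (U5 + V5) = mset [{0,1,2,3,4}, {4}, {2,3,4}, {0,1,4}]"
  by simp

lemma filt5': "filter_mset (\<lambda>h. 4 \<notin> h) (U5 + V5) = mset [{0}, {1}, {2}, {3}, {0}, {1}, {2}, {3}]"
  by simp

lemma excl3:
  assumes F: "\<forall>A\<in>#F. atom2 5 A" "sum_mset F = U5 + V5" "size F = 3"
  shows False
proof -
  interpret UVs 5 "U5 + V5" U5 V5 using U5 V5 by unfold_locales simp_all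
  have nU: "U5 \<notin># F" using U_in_F[OF F(1,2)] F(3) by auto
  have nV: "V5 \<notin># F" using V_in_F[OF F(1,2)] F(3) by auto
  have ge2: "2 \<le> size A" if A: "A \<in># F" for A
  proof -
    have "{} \<notin># A" using zB sub_sum_mset[OF A] F(2) by (metis mset_subset_eqD)
    then show "2 \<le> size A" using atom_size_count0[of 5 A] F(1) A by (simp add: not_in_iff)
  qed
  have le6: "size A \<le> 6" if A: "A \<in># F" for A using davenport[of 5 A] F(1) A by simp
  define Sq where "Sq = filter_mset (\<lambda>A. size A = 2) F"
  define N where "N = filter_mset (\<lambda>A. size A \<noteq> 2) F"
  have szF: "size F = size Sq + size N" unfolding Sq_def N_def by (rule size_partition)
  have sumF: "U5 + V5 = sum_mset Sq + sum_mset N" unfolding Sq_def N_def using F(2) sum_mset_partition by metis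
  have hSq: "size (sum_mset Sq) = 2 * size Sq" by (rule size_sum_mset_eq) (simp add: Sq_def)
  have hN: "size (sum_mset N) \<le> 6 * size N" by (rule size_sum_mset_le) (use le6 in \<open>simp add: N_def\<close>)
  have NB: "sum_mset N \<subseteq># U5 + V5" using sumF by simp
  define P' where "P' = (\<lambda>g::nat set. 4 \<in> g \<and> (0 \<in> g \<longleftrightarrow> 2 \<in> g))"
  have meet: "\<forall>X\<in>#N. \<exists>g\<in>#X. P' g"
  proof
    fix X assume XN: "X \<in># N"
    then have XF: "X \<in># F" and X2: "size X \<noteq> 2" by (simp_all add: N_def)
    have XA: "atom2 5 X" using F(1) XF by auto
    have X3: "3 \<le> size X" using ge2[OF XF] X2 by simp
    have XB: "X \<subseteq># U5 + V5" using sub_sum_mset[OF XF] F(2) by simp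
    have zX: "seq_sum X = {}" using XA by (simp add: atom2_def zero_sum_seq_def)
    have sqX: "\<forall>g. count X g \<le> 1" using atom_sqfree[OF XA X3] by blast
    have "X \<noteq> V5" using nV XF by auto
    then obtain g where "g \<in># X" "g \<in># U5" "g \<notin># V5" using meetsU[OF XB zX sqX atom_ne[OF XA]] by blast
    then show "\<exists>g\<in>#X. P' g" using P5 P'_def by blast
  qed
  have "size N \<le> size (filter_mset P' (sum_mset N))" by (rule count_bound[OF meet])
  also have "\<dots> \<le> size (filter_mset P' (U5 + V5))" by (rule size_mset_mono, rule multiset_filter_mono, rule NB)
  also have "\<dots> = 2" by (simp add: P'_def)
  finally have N2: "size N \<le> 2" .
  have s12: "size (U5 + V5) = 12" by simp
  then have "12 = 2 * size Sq + size (sum_mset N)" using sumF hSq by (metis size_union)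
  then have nN: "size N = 2" and nS: "size Sq = 1" using hN N2 szF F(3) by linarith+
  obtain S where Sq1: "Sq = {#S#}" using nS size_1_singleton_mset by blast
  have "S \<in># Sq" using Sq1 by simp
  then have SF: "S \<in># F" and S2: "size S = 2" by (simp_all add: Sq_def)
  have SA: "atom2 5 S" using F(1) SF by auto
  obtain g where Sg: "S = {#g, g#}" using atom_size2[OF SA S2] by blast
  have sumSq: "sum_mset Sq = S" using Sq1 by simp
  have SB: "S \<subseteq># U5 + V5" using sumF sumSq by simp
  have cg: "2 \<le> count (U5 + V5) g" using mset_subset_eq_count[OF SB, of g] Sg by simp
  have dist4: "distinct [{0,1,2,3,4}, {4}, {2,3,4}, {0,1,4::nat}]"
    using distinct_map[of key "[{0,1,2,3,4}, {4}, {2,3,4}, {0,1,4::nat}]"] by (simp add: key_def)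
  have g4: "4 \<notin> g"
  proof
    assume g4: "4 \<in> g"
    have "count (U5 + V5) g = count (filter_mset (\<lambda>h. 4 \<in> h) (U5 + V5)) g"
      by (simp only: count_filter_mset if_P[OF g4])
    also have "\<dots> = count (mset [{0,1,2,3,4}, {4}, {2,3,4}, {0,1,4::nat}]) g" by (simp only: filt5)
    also have "\<dots> \<le> 1" using dist4 distinct_count_atmost_1 by (metis le_refl zero_le_one)
    finally show False using cg by simp
  qed
  define Dset where "Dset = {{0},{1},{2},{3::nat}}"
  have "0 < count (U5 + V5) g" using cg by linarith
  then have "g \<in># U5 + V5" by (simp only: count_greater_zero_iff)
  then have gD: "g \<in> Dset" using g4 unfolding Dset_def by auto
  obtain X1 N' where N1: "N = add_mset X1 N'" using nN
    by (metis size_eq_Suc_imp_eq_union Suc_1 add_mset_add_single)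
  then have "size N' = 1" using nN by simp
  then obtain X2 where N2': "N' = {#X2#}" using size_1_singleton_mset by blast
  have XN: "X1 \<in># N" "X2 \<in># N" using N1 N2' by auto
  have XF: "X1 \<in># F" "X2 \<in># F" using XN by (simp_all add: N_def)
  have "size X1 \<noteq> 2" "size X2 \<noteq> 2" using XN by (simp_all add: N_def)
  moreover have "2 \<le> size X1" "2 \<le> size X2" using ge2 XF by auto
  ultimately have X3: "3 \<le> size X1" "3 \<le> size X2" by linarith+
  have XA: "atom2 5 X1" "atom2 5 X2" using XF F(1) by auto
  have sq1: "count X1 h \<le> 1" for h using atom_sqfree[OF XA(1) X3(1)] .
  have sq2: "count X2 h \<le> 1" for h using atom_sqfree[OF XA(2) X3(2)] .
  have sumN: "sum_mset N = X1 + X2" using N1 N2' by simp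
  have ceq: "count (U5 + V5) h = count S h + count X1 h + count X2 h" for h
  proof -
    have "count (U5 + V5) h = count (sum_mset Sq + sum_mset N) h" by (simp only: sumF)
    also have "\<dots> = count S h + count X1 h + count X2 h" by (simp only: sumSq sumN count_union add.assoc)
    finally show ?thesis .
  qed
  have cB': "count (U5 + V5) h = (if h \<in> Dset then 2 else 0)" if "4 \<notin> h" for h
  proof -
    have "count (U5 + V5) h = count (filter_mset (\<lambda>h. 4 \<notin> h) (U5 + V5)) h"
      by (simp only: count_filter_mset if_P[OF that])
    also have "\<dots> = count (mset [{0}, {1}, {2}, {3}, {0}, {1}, {2}, {3::nat}]) h" by (simp only: filt5')
    also have "\<dots> = (if h \<in> Dset then 2 else 0)"
    proof (cases "h \<in> Dset")
      case True
      then have "h = {0} \<or> h = {1} \<or> h = {2} \<or> h = {3}" unfolding Dset_def by simp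
      then show ?thesis using True by (elim disjE) simp_all
    next
      case False
      then have "h \<notin> set [{0}, {1}, {2}, {3}, {0}, {1}, {2}, {3::nat}]" unfolding Dset_def by simp
      then have "count (mset [{0}, {1}, {2}, {3}, {0}, {1}, {2}, {3::nat}]) h = 0" by (rule iffD2[OF count_mset_0_iff])
      then show ?thesis using False by simp
    qed
    finally show ?thesis .
  qed
  have cX1: "count X1 h = (if h \<in> Dset \<and> h \<noteq> g then 1 else 0)" if "4 \<notin> h" for h
  proof -
    have e: "count (U5 + V5) h = count S h + count X1 h + count X2 h" by (rule ceq)
    have cS: "count S h = (if h = g then 2 else 0)" using Sg by auto
    show ?thesis using e cS cB'[OF that] sq1[of h] sq2[of h] gD by (auto split: if_splits)
  qed
  have DX: "\<forall>h\<in>Dset. 4 \<notin> h" unfolding Dset_def by auto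
  have fX1: "filter_mset (\<lambda>h. 4 \<notin> h) X1 = mset_set (Dset - {g})"
    unfolding multiset_eq_iff
  proof
    fix h
    have fin: "finite (Dset - {g})" unfolding Dset_def by simp
    show "count (filter_mset (\<lambda>h. 4 \<notin> h) X1) h = count (mset_set (Dset - {g})) h"
    proof (cases "4 \<in> h")
      case True then have "h \<notin> Dset" using DX by blast
      then show ?thesis using True fin by (simp add: count_mset_set)
    next
      case False then show ?thesis using cX1[OF False] fin by (simp add: count_mset_set)
    qed
  qed
  define I where "I = {0,1,2,3::nat}"
  define f where "f = (\<lambda>h::nat set. card (h \<inter> I))"
  have zX1: "seq_sum X1 = {}" using XA(1) by (simp add: atom2_def zero_sum_seq_def)
  have ev: "even (sum_mset (image_mset f X1))"
    unfolding f_def using sum_card_cnt[of I X1] even_sum_cnt[OF zX1, of I] by (simp add: I_def)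
  have X1split: "X1 = filter_mset (\<lambda>h. 4 \<notin> h) X1 + filter_mset (\<lambda>h. 4 \<in> h) X1"
    using multiset_partition[of X1 "\<lambda>h. 4 \<notin> h"] by simp
  have p1: "sum_mset (image_mset f (filter_mset (\<lambda>h. 4 \<notin> h) X1)) = 3"
  proof -
    have "\<forall>h\<in>#mset_set (Dset - {g}). f h = 1"
      unfolding Dset_def f_def I_def by auto
    then have "sum_mset (image_mset f (mset_set (Dset - {g}))) = size (mset_set (Dset - {g}))"
      by (rule sum_mset_ones)
    also have "\<dots> = card (Dset - {g})" by simp
    also have "\<dots> = 3" using gD unfolding Dset_def by (auto simp: card_Diff_singleton)
    finally show ?thesis using fX1 by simp
  qed
  have p2: "even (sum_mset (image_mset f (filter_mset (\<lambda>h. 4 \<in> h) X1)))"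
  proof (rule sum_mset_even, rule ballI)
    fix h assume h: "h \<in># filter_mset (\<lambda>h. 4 \<in> h) X1"
    have XB1: "X1 \<subseteq># U5 + V5" using sub_sum_mset[OF XF(1)] F(2) by simp
    have "h \<in># filter_mset (\<lambda>h. 4 \<in> h) (U5 + V5)"
      using h XB1 by (meson mset_subset_eqD multiset_filter_mono)
    then have "h \<in> set [{0,1,2,3,4}, {4}, {2,3,4}, {0,1,4::nat}]" unfolding filt5 by simp
    then show "even (f h)" unfolding f_def I_def by auto
  qed
  have "sum_mset (image_mset f X1) = sum_mset (image_mset f (filter_mset (\<lambda>h. 4 \<notin> h) X1)) + sum_mset (image_mset f (filter_mset (\<lambda>h. 4 \<in> h) X1))"
    using sum_image_partition[of f X1 "\<lambda>h. 4 \<notin> h"] by simp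
  then have "odd (sum_mset (image_mset f X1))" using p1 p2 by simp
  then show False using ev by simp
qed

lemma ex5: "Lset 5 (U5 + V5) = {2, 4, 5}"
proof
  have B: "{} \<notin># U5 + V5" by simp
  show "Lset 5 (U5 + V5) \<subseteq> {2, 4, 5}"
  proof
    fix k assume k: "k \<in> Lset 5 (U5 + V5)"
    have "2 * k \<le> 12" using L_upper[OF B k] by simp
    moreover have "k \<noteq> 0"
    proof
      assume "k = 0"
      then have "0 \<in> Lset 5 (U5 + V5)" using k by simp
      then show False using L_not0[of "U5 + V5" 5] by simp
    qed
    moreover have "k \<noteq> 1" using L_not1[of "U5 + V5" U5 V5 5] k U5 V5 atom_zs atom_ne by blast
    moreover have "k \<noteq> 6"
    proof
      assume "k = 6"
      have "count (U5 + V5) {4} = 1" by (simp add: key_inj key_def)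
      then have "6 \<notin> Lset 5 (U5 + V5)" using L_not_half[OF B, of 6 "{4}"] by simp
      then show False using k \<open>k = 6\<close> by simp
    qed
    moreover have "k \<noteq> 3"
    proof
      assume "k = 3"
      then obtain F where "size F = 3" "\<forall>A\<in>#F. atom2 5 A" "sum_mset F = U5 + V5"
        using k Lset_mem by blast
      then show False using excl3 by blast
    qed
    ultimately show "k \<in> {2, 4, 5}" by auto
  qed
  have "size {#U5, V5#} \<in> Lset 5 (U5 + V5)" by (rule Lset_in) (use U5 V5 in auto)
  then have "2 \<in> Lset 5 (U5 + V5)" by (simp add: eval_nat_numeral)
  moreover have "size {#Y51, Y52, {#{0},{0}#}, {#{1},{1}#}#} \<in> Lset 5 (U5 + V5)"
    by (rule Lset_in) (use Y51 Y52 in \<open>auto intro!: dbl simp: add_mset_commute\<close>)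
  then have "4 \<in> Lset 5 (U5 + V5)" by (simp add: eval_nat_numeral)
  moreover have "size {#W5, {#{0},{0}#}, {#{1},{1}#}, {#{2},{2}#}, {#{3},{3}#}#} \<in> Lset 5 (U5 + V5)"
    by (rule Lset_in) (use W5 in \<open>auto intro!: dbl simp: add_mset_commute\<close>)
  then have "5 \<in> Lset 5 (U5 + V5)" by (simp add: eval_nat_numeral)
  ultimately show "{2, 4, 5} \<subseteq> Lset 5 (U5 + V5)" by simp
qed

lemma zss_plus: "zero_sum_seq r P \<Longrightarrow> zero_sum_seq r Q \<Longrightarrow> zero_sum_seq r (P + Q)"
  by (simp add: zero_sum_seq_def zs_plus)

lemma sys_mem: "zero_sum_seq r B \<Longrightarrow> Lset r B = S \<Longrightarrow> S \<in> system_of_sets r"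
  unfolding system_of_sets_def by blast

theorem lemma4p3:
  fixes r :: nat
  assumes "r \<ge> 3"
  shows "{2, r - 1, r} \<in> system_of_sets r \<longleftrightarrow> r \<in> {3..5}"
proof
  assume "{2, r - 1, r} \<in> system_of_sets r"
  then obtain B where "Lset r B = {2, r - 1, r}" unfolding system_of_sets_def by auto
  then have "\<not> 6 \<le> r" using no_big by blast
  then show "r \<in> {3..5}" using assms by simp
next
  assume "r \<in> {3..5}"
  then have "r = 3 \<or> r = 4 \<or> r = 5" by auto
  then show "{2, r - 1, r} \<in> system_of_sets r"
  proof (elim disjE)
    assume r: "r = 3"
    have "{2, r - 1, r} = {2, 3}" using r by auto
    moreover have "{2, 3} \<in> system_of_sets 3"
      by (rule sys_mem[OF zss_plus[OF atom_zs[OF U3] atom_zs[OF U3]] ex3])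
    ultimately show ?thesis using r by simp
  next
    assume r: "r = 4"
    have "{2, r - 1, r} = {2, 3, 4}" using r by auto
    moreover have "{2, 3, 4} \<in> system_of_sets 4"
      by (rule sys_mem[OF zss_plus[OF atom_zs[OF U4] atom_zs[OF V4]] ex4])
    ultimately show ?thesis using r by simp
  next
    assume r: "r = 5"
    have "{2, r - 1, r} = {2, 4, 5}" using r by auto
    moreover have "{2, 4, 5} \<in> system_of_sets 5"
      by (rule sys_mem[OF zss_plus[OF atom_zs[OF U5] atom_zs[OF V5]] ex5])
    ultimately show ?thesis using r by simp
  qed
qed

end
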